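(* Let $(X_n)_{n\ge1}$ be a sequence of integer-valued random variables with $\mathbb E X_n=\mu_n$ and $\operatorname{var}(X_n)=\sigma_n^2$, where $\sigma_n\to\infty$ as $n\to\infty$. Let $(\varepsilon_n)$ be a sequence of positive numbers tending to $0$ such that $$\sup_{x\in\mathbb R}\left|\sigma_n\Pr\big(X_n=\lfloor\mu_n+x\sigma_n\rfloor\big)-\frac{e^{-x^2/2}}{\sqrt{2\pi}}\right|\le\varepsilon_n\quad\text{for all }n.$$ For each $n$ let $X_n'$ be a random variable independent of $X_n$ and having the same distribution as $X_n$. Then $$\Pr(X_n=X_n')=\frac{1}{2\sqrt\pi\,\sigma_n}+O\!\left(\frac{\varepsilon_n}{\sigma_n}+\frac{1}{\sigma_n^2}\right)\quad\text{as }n\to\infty.$$ *)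

theory Defs
  imports "HOL-Probability.Probability" "HOL-Library.Landau_Symbols"
begin

end

theory Submission
  imports Defs
begin


lemma meas_floor: "(\<lambda>y::real. f \<lfloor>y\<rfloor> :: ennreal) \<in> borel_measurable borel"
proof -
  have "(\<lambda>y::real. \<lfloor>y\<rfloor>) \<in> measurable borel (count_space UNIV)"
  proof (rule measurable_count_space_eq2_countable[THEN iffD2], auto)
    fix a :: int
    have "(floor :: real \<Rightarrow> int) -` {a} = {real_of_int a..<real_of_int a + 1}" by (auto simp: floor_eq_iff)
    then show "(floor :: real \<Rightarrow> int) -` {a} \<in> sets borel" by simp
  qed
  then show ?thesis by (rule measurable_compose) simp
qed

lemma nn_integral_floor:
  fixes h :: "int \<Rightarrow> real"
  shows "(\<integral>\<^sup>+(y::real). ennreal (h \<lfloor>y\<rfloor>) \<partial>lborel) = (\<integral>\<^sup>+k. ennreal (h k) \<partial>count_space UNIV)"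
proof -
  have ind: "indicator {of_int k..<of_int k + 1} (y::real) = (indicator {\<lfloor>y\<rfloor>} k :: ennreal)" for k y
    by (auto simp: indicator_def floor_eq_iff) linarith+
  have "(\<integral>\<^sup>+(y::real). ennreal (h \<lfloor>y\<rfloor>) \<partial>lborel)
     = (\<integral>\<^sup>+(y::real). \<integral>\<^sup>+k. ennreal (h k) * indicator {of_int k..<of_int k + 1} y \<partial>count_space UNIV \<partial>lborel)"
  proof (rule nn_integral_cong)
    fix y :: real
    have "(\<integral>\<^sup>+k. ennreal (h k) * indicator {of_int k..<of_int k + 1} y \<partial>count_space UNIV)
       = (\<integral>\<^sup>+k. ennreal (h k) * indicator {\<lfloor>y\<rfloor>} k \<partial>count_space UNIV)"
      by (simp add: ind)
    also have "\<dots> = ennreal (h \<lfloor>y\<rfloor>)" by simp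
    finally show "ennreal (h \<lfloor>y\<rfloor>) = (\<integral>\<^sup>+k. ennreal (h k) * indicator {of_int k..<of_int k + 1} y \<partial>count_space UNIV)" by simp
  qed
  also have "\<dots> = (\<integral>\<^sup>+k. \<integral>\<^sup>+(y::real). ennreal (h k) * indicator {of_int k..<of_int k + 1} y \<partial>lborel \<partial>count_space UNIV)"
    by (rule nn_integral_count_space_nn_integral) auto
  also have "\<dots> = (\<integral>\<^sup>+k. ennreal (h k) \<partial>count_space UNIV)"
    by (simp add: nn_integral_cmult_indicator)
  finally show ?thesis .
qed

lemma meas_floor_gen: "(\<lambda>y::real. f \<lfloor>y\<rfloor> :: 'b::topological_space) \<in> borel_measurable borel"
proof -
  have "(\<lambda>y::real. \<lfloor>y\<rfloor>) \<in> measurable borel (count_space UNIV)"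
  proof (rule measurable_count_space_eq2_countable[THEN iffD2], auto)
    fix a :: int
    have "(floor :: real \<Rightarrow> int) -` {a} = {real_of_int a..<real_of_int a + 1}" by (auto simp: floor_eq_iff)
    then show "(floor :: real \<Rightarrow> int) -` {a} \<in> sets borel" by simp
  qed
  then show ?thesis by (rule measurable_compose) simp
qed

lemma nn_integral_floor_affine:
  fixes h :: "int \<Rightarrow> real" and s a :: real
  assumes s: "s > 0"
  shows "(\<integral>\<^sup>+(x::real). ennreal (h \<lfloor>a + x * s\<rfloor>) \<partial>lborel) = ennreal (1/s) * (\<integral>\<^sup>+k. ennreal (h k) \<partial>count_space UNIV)"
proof -
  have m: "(\<lambda>y::real. ennreal (h \<lfloor>y\<rfloor>)) \<in> borel_measurable borel"
    by (rule meas_floor_gen)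
  have "(\<integral>\<^sup>+(y::real). ennreal (h \<lfloor>y\<rfloor>) \<partial>lborel) = ennreal \<bar>s\<bar> * (\<integral>\<^sup>+x. ennreal (h \<lfloor>a + s * x\<rfloor>) \<partial>lborel)"
    using nn_integral_real_affine[OF m, of s a] s by simp
  then have "ennreal (1/s) * (\<integral>\<^sup>+k. ennreal (h k) \<partial>count_space UNIV) = ennreal (1/s) * ennreal s * (\<integral>\<^sup>+x. ennreal (h \<lfloor>a + s * x\<rfloor>) \<partial>lborel)"
    using s by (simp add: nn_integral_floor mult.assoc)
  also have "ennreal (1/s) * ennreal s = 1" using s by (simp flip: ennreal_mult)
  finally show ?thesis by (simp add: mult.commute)
qed

lemma diag_prob:
  fixes q :: "int pmf"
  shows "ennreal (measure_pmf.prob (pair_pmf q q) {z. fst z = snd z}) = (\<integral>\<^sup>+k. ennreal ((pmf q k)\<^sup>2) \<partial>count_space UNIV)"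
proof -
  have "ennreal (measure_pmf.prob (pair_pmf q q) {z. fst z = snd z}) = emeasure (pair_pmf q q) {z. fst z = snd z}"
    by (simp add: measure_pmf.emeasure_eq_measure)
  also have "\<dots> = (\<integral>\<^sup>+z. indicator {z. fst z = snd z} z \<partial>pair_pmf q q)"
    by simp
  also have "\<dots> = (\<integral>\<^sup>+a. \<integral>\<^sup>+b. indicator {a} b \<partial>q \<partial>q)"
    unfolding nn_integral_pair_pmf' by (intro nn_integral_cong) (auto simp: indicator_def)
  also have "\<dots> = (\<integral>\<^sup>+a. ennreal (pmf q a) \<partial>q)"
    by (simp add: emeasure_pmf_single)
  also have "\<dots> = (\<integral>\<^sup>+k. ennreal ((pmf q k)\<^sup>2) \<partial>count_space UNIV)"
    by (simp add: nn_integral_measure_pmf power2_eq_square ennreal_mult)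
  finally show ?thesis .
qed

lemma pmf_sum1:
  fixes q :: "int pmf"
  shows "(\<integral>\<^sup>+k. ennreal (pmf q k) \<partial>count_space UNIV) = 1"
  using nn_integral_measure_pmf[of q "\<lambda>_. 1"] by simp

lemma gauss1: "(\<integral>\<^sup>+(x::real). ennreal (exp (- x\<^sup>2 / 2) / sqrt (2 * pi)) \<partial>lborel) = 1"
proof -
  have "(\<integral>\<^sup>+(x::real). ennreal (exp (- x\<^sup>2 / 2) / sqrt (2 * pi)) \<partial>lborel) = (\<integral>\<^sup>+(x::real). ennreal (normal_density 0 1 x) \<partial>lborel)"
    by (simp add: std_normal_density_def)
  also have "\<dots> = 1"
    by (subst nn_integral_eq_integral) auto
  finally show ?thesis .
qed

lemma gauss2: "(\<integral>\<^sup>+(x::real). ennreal ((exp (- x\<^sup>2 / 2) / sqrt (2 * pi))\<^sup>2) \<partial>lborel) = ennreal (1 / (2 * sqrt pi))"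
proof -
  have eq: "(exp (- x\<^sup>2 / 2) / sqrt (2 * pi))\<^sup>2 = (1 / (2 * sqrt pi)) * normal_density 0 (1 / sqrt 2) x" for x :: real
  proof -
    have "(exp (- x\<^sup>2 / 2))\<^sup>2 = exp (- x\<^sup>2)" by (simp flip: exp_of_nat_mult)
    then show ?thesis
      by (simp add: normal_density_def power_divide real_sqrt_mult power2_eq_square)
  qed
  have "(\<integral>\<^sup>+(x::real). ennreal ((exp (- x\<^sup>2 / 2) / sqrt (2 * pi))\<^sup>2) \<partial>lborel) = ennreal (1 / (2 * sqrt pi)) * (\<integral>\<^sup>+(x::real). ennreal (normal_density 0 (1 / sqrt 2) x) \<partial>lborel)"
    by (subst nn_integral_cmult[symmetric], simp, rule nn_integral_cong, simp only: eq, subst ennreal_mult, auto)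
  also have "(\<integral>\<^sup>+(x::real). ennreal (normal_density 0 (1 / sqrt 2) x) \<partial>lborel) = 1"
    by (subst nn_integral_eq_integral) auto
  finally show ?thesis by simp
qed

lemma key:
  fixes q :: "int pmf" and a s e :: real
  assumes s: "s > 0"
    and llt: "\<And>x. \<bar>s * pmf q \<lfloor>a + x * s\<rfloor> - exp (- x\<^sup>2 / 2) / sqrt (2 * pi)\<bar> \<le> e"
  shows "\<bar>measure_pmf.prob (pair_pmf q q) {z. fst z = snd z} - 1 / (2 * sqrt pi * s)\<bar> \<le> 2 * e / s"
proof -
  define G where "G x = s * pmf q \<lfloor>a + x * s\<rfloor>" for x :: real
  define \<phi> where "\<phi> x = exp (- x\<^sup>2 / 2) / sqrt (2 * pi)" for x :: real
  define D where "D = measure_pmf.prob (pair_pmf q q) {z. fst z = snd z}"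
  define c where "c = 1 / (2 * sqrt pi)"
  have e0: "e \<ge> 0" using llt[of 0] by linarith
  have G0: "G x \<ge> 0" for x using s by (simp add: G_def)
  have p0: "\<phi> x \<ge> 0" for x by (simp add: \<phi>_def)
  have D0: "D \<ge> 0" by (simp add: D_def)
  have c0: "c \<ge> 0" by (simp add: c_def)
  have diff: "\<bar>G x - \<phi> x\<bar> \<le> e" for x using llt[of x] by (simp add: G_def \<phi>_def)
  have mG[measurable]: "G \<in> borel_measurable borel"
  proof -
    have "(\<lambda>y::real. s * pmf q \<lfloor>y\<rfloor>) \<in> borel_measurable borel" by (rule meas_floor_gen)
    then have "(\<lambda>x. (\<lambda>y::real. s * pmf q \<lfloor>y\<rfloor>) (a + x * s)) \<in> borel_measurable borel"
      by (rule measurable_compose[rotated]) simp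
    then show ?thesis by (simp add: G_def[abs_def])
  qed
  have mp[measurable]: "\<phi> \<in> borel_measurable borel" unfolding \<phi>_def[abs_def] by measurable
  have IG2: "(\<integral>\<^sup>+x. ennreal ((G x)\<^sup>2) \<partial>lborel) = ennreal (s * D)"
  proof -
    have "(\<integral>\<^sup>+x. ennreal ((G x)\<^sup>2) \<partial>lborel) = (\<integral>\<^sup>+x. ennreal ((\<lambda>k. (s * pmf q k)\<^sup>2) \<lfloor>a + x * s\<rfloor>) \<partial>lborel)"
      by (simp add: G_def)
    also have "\<dots> = ennreal (1/s) * (\<integral>\<^sup>+k. ennreal ((s * pmf q k)\<^sup>2) \<partial>count_space UNIV)"
      by (rule nn_integral_floor_affine[OF s])
    also have "(\<integral>\<^sup>+k. ennreal ((s * pmf q k)\<^sup>2) \<partial>count_space UNIV) = ennreal (s\<^sup>2) * (\<integral>\<^sup>+k. ennreal ((pmf q k)\<^sup>2) \<partial>count_space UNIV)"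
      by (subst nn_integral_cmult[symmetric]) (auto simp: power_mult_distrib ennreal_mult)
    also have "(\<integral>\<^sup>+k. ennreal ((pmf q k)\<^sup>2) \<partial>count_space UNIV) = ennreal D"
      by (simp add: D_def diag_prob)
    also have "ennreal (1/s) * (ennreal (s\<^sup>2) * ennreal D) = ennreal (1/s * (s\<^sup>2 * D))"
      using s D0 by (subst ennreal_mult[symmetric]; simp)+
    also have "1/s * (s\<^sup>2 * D) = s * D" using s by (simp add: power2_eq_square)
    finally show ?thesis .
  qed
  have IG: "(\<integral>\<^sup>+x. ennreal (G x) \<partial>lborel) = 1"
  proof -
    have "(\<integral>\<^sup>+x. ennreal (G x) \<partial>lborel) = (\<integral>\<^sup>+x. ennreal ((\<lambda>k. s * pmf q k) \<lfloor>a + x * s\<rfloor>) \<partial>lborel)"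
      by (simp add: G_def)
    also have "\<dots> = ennreal (1/s) * (\<integral>\<^sup>+k. ennreal (s * pmf q k) \<partial>count_space UNIV)"
      by (rule nn_integral_floor_affine[OF s])
    also have "(\<integral>\<^sup>+k. ennreal (s * pmf q k) \<partial>count_space UNIV) = ennreal s * (\<integral>\<^sup>+k. ennreal (pmf q k) \<partial>count_space UNIV)"
      using s by (subst nn_integral_cmult[symmetric]) (auto simp: ennreal_mult)
    also have "ennreal (1/s) * (ennreal s * (\<integral>\<^sup>+k. ennreal (pmf q k) \<partial>count_space UNIV)) = ennreal (1/s * s)"
      using s by (simp add: pmf_sum1 flip: ennreal_mult)
    finally show ?thesis using s by simp
  qed
  have Ip: "(\<integral>\<^sup>+x. ennreal (\<phi> x) \<partial>lborel) = 1" unfolding \<phi>_def by (rule gauss1)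
  have Ip2: "(\<integral>\<^sup>+x. ennreal ((\<phi> x)\<^sup>2) \<partial>lborel) = ennreal c" unfolding \<phi>_def c_def by (rule gauss2)
  have split: "(\<integral>\<^sup>+x. ennreal (f x + e * G x + e * \<phi> x) \<partial>lborel) = (\<integral>\<^sup>+x. ennreal (f x) \<partial>lborel) + ennreal e + ennreal e"
    if f0: "\<And>x. f x \<ge> 0" and [measurable]: "f \<in> borel_measurable borel" for f
  proof -
    have "(\<integral>\<^sup>+x. ennreal (f x + e * G x + e * \<phi> x) \<partial>lborel)
        = (\<integral>\<^sup>+x. ennreal (f x) + ennreal e * ennreal (G x) + ennreal e * ennreal (\<phi> x) \<partial>lborel)"
      using f0 e0 G0 p0 by (intro nn_integral_cong) (simp add: ennreal_plus ennreal_mult)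
    also have "\<dots> = (\<integral>\<^sup>+x. ennreal (f x) \<partial>lborel) + ennreal e * (\<integral>\<^sup>+x. ennreal (G x) \<partial>lborel) + ennreal e * (\<integral>\<^sup>+x. ennreal (\<phi> x) \<partial>lborel)"
      by (simp add: nn_integral_add nn_integral_cmult)
    finally show ?thesis by (simp add: IG Ip)
  qed
  have "ennreal (s * D) \<le> (\<integral>\<^sup>+x. ennreal ((\<phi> x)\<^sup>2 + e * G x + e * \<phi> x) \<partial>lborel)"
    unfolding IG2[symmetric]
  proof (intro nn_integral_mono ennreal_leI)
    fix x
    have "(G x)\<^sup>2 - (\<phi> x)\<^sup>2 = (G x - \<phi> x) * (G x + \<phi> x)" by (simp add: power2_eq_square algebra_simps)
    also have "\<dots> \<le> e * (G x + \<phi> x)"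
      using diff[of x] G0[of x] p0[of x] by (intro mult_right_mono) auto
    finally show "(G x)\<^sup>2 \<le> (\<phi> x)\<^sup>2 + e * G x + e * \<phi> x" by (simp add: algebra_simps)
  qed
  also have "\<dots> = ennreal c + ennreal e + ennreal e"
    using split[of "\<lambda>x. (\<phi> x)\<^sup>2"] by (simp add: Ip2)
  also have "\<dots> = ennreal (c + e + e)" using c0 e0 by (metis add_nonneg_nonneg ennreal_plus)
  finally have up: "s * D \<le> c + e + e" using e0 c_def
    by (subst (asm) ennreal_le_iff) auto
  have "ennreal c \<le> (\<integral>\<^sup>+x. ennreal ((G x)\<^sup>2 + e * G x + e * \<phi> x) \<partial>lborel)"
    unfolding Ip2[symmetric]
  proof (intro nn_integral_mono ennreal_leI)
    fix x
    have "(\<phi> x)\<^sup>2 - (G x)\<^sup>2 = (\<phi> x - G x) * (G x + \<phi> x)" by (simp add: power2_eq_square algebra_simps)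
    also have "\<dots> \<le> e * (G x + \<phi> x)"
      using diff[of x] G0[of x] p0[of x] by (intro mult_right_mono) auto
    finally show "(\<phi> x)\<^sup>2 \<le> (G x)\<^sup>2 + e * G x + e * \<phi> x" by (simp add: algebra_simps)
  qed
  also have "\<dots> = ennreal (s * D) + ennreal e + ennreal e"
    using split[of "\<lambda>x. (G x)\<^sup>2"] by (simp add: IG2)
  also have "\<dots> = ennreal (s * D + e + e)" using s D0 e0 by (metis add_nonneg_nonneg ennreal_plus mult_nonneg_nonneg less_imp_le)
  finally have lo: "c \<le> s * D + e + e" using e0 s D0
    by (subst (asm) ennreal_le_iff) auto
  have "\<bar>D - c / s\<bar> = \<bar>s * D - c\<bar> / s" using s by (simp add: field_simps abs_div)
  also have "\<dots> \<le> 2 * e / s" using up lo s by (intro divide_right_mono) auto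
  finally show ?thesis by (simp add: D_def c_def)
qed


theorem lemma2:
  fixes p :: "nat \<Rightarrow> int pmf" and \<mu> \<sigma> \<epsilon> :: "nat \<Rightarrow> real"
  assumes sq_int: "\<And>n. integrable (measure_pmf (p n)) (\<lambda>k. (real_of_int k)\<^sup>2)"
    and mean: "\<And>n. measure_pmf.expectation (p n) real_of_int = \<mu> n"
    and var: "\<And>n. measure_pmf.variance (p n) real_of_int = (\<sigma> n)\<^sup>2"
    and sigma_inf: "filterlim \<sigma> at_top sequentially"
    and eps_pos: "\<And>n. \<epsilon> n > 0"
    and eps_lim: "\<epsilon> \<longlonglongrightarrow> 0"
    and llt: "\<And>n x. \<bar>\<sigma> n * pmf (p n) \<lfloor>\<mu> n + x * \<sigma> n\<rfloor> - exp (- x\<^sup>2 / 2) / sqrt (2 * pi)\<bar> \<le> \<epsilon> n"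
  shows "(\<lambda>n. measure_pmf.prob (pair_pmf (p n) (p n)) {z. fst z = snd z} - 1 / (2 * sqrt pi * \<sigma> n))
           \<in> O(\<lambda>n. \<epsilon> n / \<sigma> n + 1 / (\<sigma> n)\<^sup>2)"
proof (rule bigoI[where c = 2])
  have ev: "eventually (\<lambda>n. \<sigma> n > 0) sequentially"
    by (rule eventually_compose_filterlim[OF eventually_gt_at_top sigma_inf])
  show "eventually (\<lambda>n. norm (measure_pmf.prob (pair_pmf (p n) (p n)) {z. fst z = snd z} - 1 / (2 * sqrt pi * \<sigma> n))
          \<le> 2 * norm (\<epsilon> n / \<sigma> n + 1 / (\<sigma> n)\<^sup>2)) sequentially"
    using ev
  proof eventually_elim
    case (elim n)
    have k: "\<bar>measure_pmf.prob (pair_pmf (p n) (p n)) {z. fst z = snd z} - 1 / (2 * sqrt pi * \<sigma> n)\<bar> \<le> 2 * \<epsilon> n / \<sigma> n"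
      by (rule key[OF elim llt])
    have "\<epsilon> n / \<sigma> n \<le> \<epsilon> n / \<sigma> n + 1 / (\<sigma> n)\<^sup>2" by simp
    moreover have "0 \<le> \<epsilon> n / \<sigma> n" using elim eps_pos[of n] by simp
    ultimately have "2 * \<epsilon> n / \<sigma> n \<le> 2 * \<bar>\<epsilon> n / \<sigma> n + 1 / (\<sigma> n)\<^sup>2\<bar>" by simp
    then show ?case using k unfolding real_norm_def by linarith
  qed
qed

end
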